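(* For every integer $s\ge1$, $F_{s,2}(x)=\binom{x-2}{s-1}=\frac{1}{(s-1)!}\prod_{p=2}^{s}(x-p)$. For every integer $s\ge2$, $F_{s,3}(x)=\frac{1}{(s-1)!}(x-2s)\prod_{p=3}^{s}(x-p)$ (an empty product equals $1$).
   Context: For an integer $j\ge0$, $\binom{x}{j}=x(x-1)\cdots(x-j+1)/j!$ as a polynomial in $x$, and $\binom{x}{j}=0$ for $j<0$. For integers $s\ge1$, $k\ge1$, the Moser polynomial is $F_{s,k}(x)=\sum_{p=1}^{s}(-1)^{p-1}p^{k-1}\binom{x}{s-p}$. *)

theory Defs
  imports "HOL-Computational_Algebra.Polynomial"
begin

definition pbinom :: "int \<Rightarrow> rat poly" where
  "pbinom j = (if j < 0 then 0
     else smult (1 / fact (nat j)) (\<Prod>i<nat j. [:- of_nat i, 1:]))"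

definition moser :: "nat \<Rightarrow> nat \<Rightarrow> rat poly" where
  "moser s k = (\<Sum>p=1..s. smult ((-1) ^ (p - 1) * of_nat p ^ (k - 1)) (pbinom (int s - int p)))"

end

theory Submission imports Defs begin

definition SS :: "(nat \<Rightarrow> rat) \<Rightarrow> rat \<Rightarrow> nat \<Rightarrow> rat" where
  "SS g x n = (\<Sum>q\<le>n. (-1)^(n-q) * g (n-q) * (x gchoose q))"

lemma SS_step: "SS g x (Suc n) = g 0 * (x gchoose (Suc n)) - SS (\<lambda>m. g (Suc m)) x n"
proof -
  have "SS g x (Suc n) = g 0 * (x gchoose (Suc n)) + (\<Sum>q\<le>n. (-1)^(Suc n-q) * g (Suc n-q) * (x gchoose q))"
    unfolding SS_def by simp
  also have "(\<Sum>q\<le>n. (-1)^(Suc n-q) * g (Suc n-q) * (x gchoose q)) = - SS (\<lambda>m. g (Suc m)) x n"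
    unfolding SS_def sum_negf[symmetric]
    by (rule sum.cong) (auto simp: Suc_diff_le)
  finally show ?thesis by simp
qed

lemma SS_add: "SS (\<lambda>m. g m + h m) x n = SS g x n + SS h x n"
  unfolding SS_def by (simp add: algebra_simps sum.distrib)
lemma SS_mult: "SS (\<lambda>m. c * g m) x n = c * SS g x n"
  unfolding SS_def by (simp add: algebra_simps sum_distrib_left)

lemma pasc: "((y::rat) gchoose (Suc k)) = ((y-1) gchoose k) + ((y-1) gchoose (Suc k))"
  using gbinomial_Suc_Suc[of "y-1" k] by simp

lemma S0: "SS (\<lambda>m. 1) x n = ((x-1) gchoose n)"
proof (induction n)
  case 0 then show ?case by (simp add: SS_def)
next
  case (Suc n) then show ?case using SS_step[of "\<lambda>m. 1" x n] pasc[of x n] by simp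
qed

lemma S1: "SS (\<lambda>m. of_nat m + 1) x n = ((x-2) gchoose n)"
proof (induction n)
  case 0 then show ?case by (simp add: SS_def)
next
  case (Suc n)
  have h: "SS (\<lambda>m. of_nat (Suc m) + 1) x n = SS (\<lambda>m. of_nat m + 1) x n + SS (\<lambda>m. 1) x n"
    unfolding SS_def sum.distrib[symmetric] by (rule sum.cong) (auto simp: algebra_simps)
  have st: "SS (\<lambda>m. of_nat m + 1) x (Suc n) = (of_nat 0 + 1) * (x gchoose (Suc n)) - SS (\<lambda>m. of_nat (Suc m) + 1) x n"
    by (rule SS_step)
  show ?case unfolding st h Suc S0 using pasc[of x n] pasc[of "x-1" n]
    by (simp add: algebra_simps)
qed

lemma S2: "SS (\<lambda>m. (of_nat m + 1)^2) x (Suc n) = ((x-3) gchoose (Suc n)) - ((x-3) gchoose n)"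
proof (induction n)
  case 0 then show ?case by (simp add: SS_def)
next
  case (Suc n)
  have e: "(\<lambda>m. (of_nat (Suc m) + 1 :: rat)^2) = (\<lambda>m. (of_nat m + 1)^2 + (2 * (of_nat m + 1) + 1))"
    by (auto simp: power2_eq_square algebra_simps)
  have "SS (\<lambda>m. (of_nat (Suc m) + 1)^2) x (Suc n) = SS (\<lambda>m. (of_nat m + 1)^2) x (Suc n)
      + (2 * SS (\<lambda>m. of_nat m + 1) x (Suc n) + SS (\<lambda>m. 1) x (Suc n))"
    unfolding e SS_add SS_mult ..
  then show ?case using SS_step[of "\<lambda>m. (of_nat m + 1)^2" x "Suc n"] Suc S0[of x "Suc n"] S1[of x "Suc n"]
     pasc[of x "Suc n"] pasc[of "x-1" "Suc n"] pasc[of "x-2" "Suc n"] pasc[of "x-2" "n"]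
    by (simp add: algebra_simps)
qed

lemma poly_pbinom: "poly (pbinom (int m)) x = (x gchoose m)"
  unfolding pbinom_def gbinomial_prod_rev
  by (simp add: poly_prod atLeast0LessThan field_simps)

lemma poly_moser: "poly (moser (Suc n) k) x = SS (\<lambda>m. (of_nat m + 1) ^ (k-1)) x n"
proof -
  have "poly (moser (Suc n) k) x = (\<Sum>p=1..Suc n. (-1)^(p-1) * of_nat p ^ (k-1) * (x gchoose (Suc n - p)))"
    unfolding moser_def poly_sum
  proof (rule sum.cong)
    fix p assume "p \<in> {1..Suc n}"
    then have "int (Suc n) - int p = int (Suc n - p)" by auto
    then show "poly (smult ((-1)^(p-1) * of_nat p ^ (k-1)) (pbinom (int (Suc n) - int p))) x
      = (-1)^(p-1) * of_nat p ^ (k-1) * (x gchoose (Suc n - p))"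
      by (simp only: poly_smult poly_pbinom)
  qed simp
  also have "\<dots> = SS (\<lambda>m. (of_nat m + 1) ^ (k-1)) x n"
    unfolding SS_def
    by (rule sum.reindex_bij_witness[where i="\<lambda>q. Suc n - q" and j="\<lambda>p. Suc n - p"])
       (auto simp: Suc_diff_le of_nat_diff)
  finally show ?thesis .
qed

lemma prod_shift2: "(\<Prod>p=2..Suc n. (x::rat) - of_nat p) = (\<Prod>i<n. x - 2 - of_nat i)"
  by (rule prod.reindex_bij_witness[where i="\<lambda>i. i + 2" and j="\<lambda>p. p - 2"]) auto

lemma prod_shift3: "(\<Prod>p=3..Suc (Suc n). (x::rat) - of_nat p) = (\<Prod>i<n. x - 3 - of_nat i)"
  by (rule prod.reindex_bij_witness[where i="\<lambda>i. i + 3" and j="\<lambda>p. p - 3"]) auto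

theorem mainTheorem6:
  shows "(\<forall>s::nat. s \<ge> 1 \<longrightarrow>
            moser s 2 = pcompose (pbinom (int s - 1)) [:-2, 1:] \<and>
            moser s 2 = smult (1 / fact (s - 1)) (\<Prod>p=2..s. [:- of_nat p, 1:]))
       \<and> (\<forall>s::nat. s \<ge> 2 \<longrightarrow>
            moser s 3 = smult (1 / fact (s - 1))
              ([:- (2 * of_nat s), 1:] * (\<Prod>p=3..s. [:- of_nat p, 1:])))"
proof (intro conjI allI impI)
  fix s :: nat assume "s \<ge> 1"
  then obtain n where s: "s = Suc n" by (cases s) auto
  have m2: "poly (moser s 2) x = ((x-2) gchoose n)" for x
    unfolding s poly_moser using S1[of x n] by simp
  show "moser s 2 = pcompose (pbinom (int s - 1)) [:-2, 1:]"
  proof (rule poly_eq_poly_eq_iff[THEN iffD1], rule ext)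
    fix x
    have "int s - 1 = int n" using s by simp
    then show "poly (moser s 2) x = poly (pcompose (pbinom (int s - 1)) [:-2, 1:]) x"
      unfolding m2 poly_pcompose by (simp add: poly_pbinom)
  qed
  show "moser s 2 = smult (1 / fact (s - 1)) (\<Prod>p=2..s. [:- of_nat p, 1:])"
  proof (rule poly_eq_poly_eq_iff[THEN iffD1], rule ext)
    fix x
    show "poly (moser s 2) x = poly (smult (1 / fact (s - 1)) (\<Prod>p=2..s. [:- of_nat p, 1:])) x"
    proof -
      have "poly (smult (1 / fact (s - 1)) (\<Prod>p=2..s. [:- of_nat p, 1:])) x
          = (\<Prod>p=2..Suc n. x - of_nat p) / fact n"
        unfolding s poly_smult poly_prod by simp
      also have "\<dots> = ((x-2) gchoose n)"
        unfolding prod_shift2 gbinomial_prod_rev atLeast0LessThan by (simp add: algebra_simps)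
      finally show ?thesis using m2 by simp
    qed
  qed
next
  fix s :: nat assume "s \<ge> 2"
  then obtain n where s: "s = Suc (Suc n)" by (metis add_2_eq_Suc le_Suc_ex)
  show "moser s 3 = smult (1 / fact (s - 1))
              ([:- (2 * of_nat s), 1:] * (\<Prod>p=3..s. [:- of_nat p, 1:]))"
  proof (rule poly_eq_poly_eq_iff[THEN iffD1], rule ext)
    fix x :: rat
    define P where "P = (\<Prod>i<n. x - 3 - of_nat i)"
    have a: "((x-3) gchoose (Suc n)) = P * (x - 3 - of_nat n) / fact (Suc n)"
      unfolding P_def gbinomial_prod_rev atLeast0LessThan by simp
    have b: "((x-3) gchoose n) = P / fact n"
      unfolding P_def gbinomial_prod_rev atLeast0LessThan by simp
    have "poly (moser s 3) x = ((x-3) gchoose (Suc n)) - ((x-3) gchoose n)"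
      unfolding s poly_moser using S2[of x n] by (simp add: power2_eq_square)
    also have "\<dots> = P * (x - 2 * of_nat s) / fact (Suc n)"
    proof -
      have f: "(fact (Suc n)::rat) = (of_nat n + 1) * fact n" by (simp add: algebra_simps)
      have nz: "(of_nat n + 1) * (fact n::rat) \<noteq> 0" by (simp add: add_pos_nonneg)
      have nz2: "(fact n::rat) \<noteq> 0" by simp
      define D where "D = (of_nat n + 1) * (fact n::rat)"
      have e1: "P / fact n = (P * (of_nat n + 1)) / D"
        unfolding D_def using nz2 by simp
      have "((x-3) gchoose (Suc n)) - ((x-3) gchoose n) = (P * (x - 3 - of_nat n) - P * (of_nat n + 1)) / D"
        unfolding a b e1 f D_def[symmetric] by (simp add: diff_divide_distrib)
      also have "P * (x - 3 - of_nat n) - P * (of_nat n + 1) = P * (x - 2 * of_nat s)"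
        unfolding s by (simp add: algebra_simps)
      finally show ?thesis unfolding f D_def .
    qed
    also have "\<dots> = poly (smult (1 / fact (s - 1))
              ([:- (2 * of_nat s), 1:] * (\<Prod>p=3..s. [:- of_nat p, 1:]))) x"
    proof -
      have "poly (smult (1 / fact (s - 1))
              ([:- (2 * of_nat s), 1:] * (\<Prod>p=3..s. [:- of_nat p, 1:]))) x
          = (x - 2 * of_nat s) * (\<Prod>p=3..Suc (Suc n). x - of_nat p) / fact (Suc n)"
        unfolding s poly_smult poly_mult poly_prod by simp
      also have "\<dots> = P * (x - 2 * of_nat s) / fact (Suc n)"
        unfolding prod_shift3 P_def by (simp add: algebra_simps)
      finally show ?thesis by simp
    qed
    finally show "poly (moser s 3) x = poly (smult (1 / fact (s - 1))
              ([:- (2 * of_nat s), 1:] * (\<Prod>p=3..s. [:- of_nat p, 1:]))) x" .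
  qed
qed

end
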